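(* Let $0<c<1$ and $0<d<1$ be irrational numbers, and let $f(n)=[c(n+1)]-[cn]$ and $g(n)=[d(n+1)]-[dn]$. Then for every real $t\ge0$, $$\sum_{n\le t} f(n)\,g([cn]+1)=[d([c([t]+1)]+1)],$$ where the sum is over positive integers $n\le t$.
   Context: $[x]$ is the greatest integer not exceeding $x$. Note $f$ is the indicator of $\{[j/c]:j\ge1\}$ and $g$ the indicator of $\{[j/d]:j\ge1\}$. *)

theory Defs
  imports Complex_Main
begin

end

theory Submission
  imports Defs
begin

lemma floor_step01:
  fixes c x :: real
  assumes "0 < c" "c < 1"
  shows "\<lfloor>c * (x + 1)\<rfloor> = \<lfloor>c * x\<rfloor> \<or> \<lfloor>c * (x + 1)\<rfloor> = \<lfloor>c * x\<rfloor> + 1"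
proof -
  have a: "c * x \<le> c * (x + 1)" "c * (x + 1) < c * x + 1" using assms by (auto simp: algebra_simps)
  have "\<lfloor>c * x\<rfloor> \<le> \<lfloor>c * (x + 1)\<rfloor>" using a(1) floor_mono by blast
  moreover have "\<lfloor>c * (x + 1)\<rfloor> \<le> \<lfloor>c * x\<rfloor> + 1"
    using a(2) by (metis floor_add_int floor_mono less_imp_le of_int_1)
  ultimately show ?thesis by linarith
qed

theorem lemma7:
  fixes c d t :: real and f g :: "int \<Rightarrow> int"
  assumes "0 < c" "c < 1" "0 < d" "d < 1"
    and "c \<notin> \<rat>" "d \<notin> \<rat>"
    and "\<And>n. f n = \<lfloor>c * (of_int n + 1)\<rfloor> - \<lfloor>c * of_int n\<rfloor>"
    and "\<And>n. g n = \<lfloor>d * (of_int n + 1)\<rfloor> - \<lfloor>d * of_int n\<rfloor>"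
    and "t \<ge> 0"
  shows "(\<Sum>n\<in>{1..\<lfloor>t\<rfloor>}. f n * g (\<lfloor>c * of_int n\<rfloor> + 1))
         = \<lfloor>d * (of_int \<lfloor>c * (of_int \<lfloor>t\<rfloor> + 1)\<rfloor> + 1)\<rfloor>"
proof -
  have main: "(\<Sum>n\<in>{1..int N}. f n * g (\<lfloor>c * of_int n\<rfloor> + 1))
         = \<lfloor>d * (of_int \<lfloor>c * (of_int (int N) + 1)\<rfloor> + 1)\<rfloor>" for N :: nat
  proof (induction N)
    case 0
    have "\<lfloor>c\<rfloor> = 0" using assms(1,2) by (simp add: floor_eq_iff)
    moreover have "\<lfloor>d\<rfloor> = 0" using assms(3,4) by (simp add: floor_eq_iff)
    ultimately show ?case by simp
  next
    case (Suc N)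
    define M where "M = \<lfloor>c * (of_int (int N) + 1)\<rfloor>"
    have fN: "f (int N + 1) = \<lfloor>c * (of_int (int N) + 1 + 1)\<rfloor> - M"
      using assms(7) M_def by simp
    have eq: "{1..int (Suc N)} = insert (int N + 1) {1..int N}" by auto
    have "(\<Sum>n\<in>{1..int (Suc N)}. f n * g (\<lfloor>c * of_int n\<rfloor> + 1))
        = f (int N + 1) * g (M + 1) + (\<Sum>n\<in>{1..int N}. f n * g (\<lfloor>c * of_int n\<rfloor> + 1))"
      unfolding eq M_def by (simp add: add.commute)
    also have "\<dots> = f (int N + 1) * g (M + 1) + \<lfloor>d * (of_int M + 1)\<rfloor>"
      using Suc M_def by simp
    also have "\<dots> = \<lfloor>d * (of_int \<lfloor>c * (of_int (int (Suc N)) + 1)\<rfloor> + 1)\<rfloor>"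
    proof -
      have e: "of_int (int (Suc N)) + 1 = (of_int (int N) + 1) + (1::real)" by simp
      from floor_step01[OF assms(1,2), of "of_int (int N) + 1"]
      show ?thesis
      proof
        assume h: "\<lfloor>c * (of_int (int N) + 1 + 1)\<rfloor> = \<lfloor>c * (of_int (int N) + 1)\<rfloor>"
        then show ?thesis using fN M_def e by simp
      next
        assume h: "\<lfloor>c * (of_int (int N) + 1 + 1)\<rfloor> = \<lfloor>c * (of_int (int N) + 1)\<rfloor> + 1"
        then have "f (int N + 1) = 1" using fN M_def by simp
        moreover have "g (M + 1) = \<lfloor>d * (of_int M + 1 + 1)\<rfloor> - \<lfloor>d * (of_int M + 1)\<rfloor>"
          using assms(8) by simp
        ultimately show ?thesis using h M_def e by simp
      qed
    qed
    finally show ?case .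
  qed
  have "\<lfloor>t\<rfloor> = int (nat \<lfloor>t\<rfloor>)" using assms(9) by simp
  then show ?thesis using main[of "nat \<lfloor>t\<rfloor>"] by metis
qed

end
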